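(* For the direct referral reward scheme on the chain defined in the context, for every $i\le h-1$, $$r(i,1)\le nhP_h+1\quad\text{and}\quad r(i,0)\le nh^2P_h+h.$$
   Context: Chain with agents at positions $1,2,\dots$, each independently holding an answer with probability $p=1/n$; $h\ge1$. $r(i,s)$ is the reward to the agent at position $i$ when the first answer is at position $i+s\le h$. Let $P_i=\sum_{j=1}^i p(1-p)^{j-1}$ and $R_i=\sum_{s=1}^{h-i} r(i,s)p(1-p)^{s-1}$ (so $R_h=0$). The scheme is defined backwards by: $r(i,1)=nR_{i+1}+P_{h-i-1}$ for $i\le h-1$; $r(i,0)=\sum_{t=i}^{h-1}r(t,1)+1$ for $1\le i\le h$; $r(i,s)=1$ if $i+s\le h$ and $s>1$; $r(i,s)=0$ otherwise. *)

theory Defs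
  imports Complex_Main
begin

text \<open>Success probability p = 1/n of each agent independently holding an answer.\<close>
definition prob :: "nat \<Rightarrow> real" where
  "prob n = 1 / real n"

definition Pcum :: "nat \<Rightarrow> nat \<Rightarrow> real" where
  "Pcum n i = (\<Sum>j=1..i. prob n * (1 - prob n) ^ (j - 1))"

function rew :: "nat \<Rightarrow> nat \<Rightarrow> nat \<Rightarrow> nat \<Rightarrow> real" where
  "rew n h i s =
    (if s = 1 \<and> i + 1 \<le> h then
       real n * (\<Sum>s'=1..h-(i+1). rew n h (i+1) s' * prob n * (1 - prob n) ^ (s' - 1))
       + Pcum n (h - i - 1)
     else if s = 0 \<and> i \<le> h then (\<Sum>t=i..h-1. rew n h t 1) + 1
     else if 1 < s \<and> i + s \<le> h then 1
     else 0)"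
  by pat_completeness auto
termination
  by (relation "measure (\<lambda>(n,h,i,s). 2 * (h - i) + (if s = 0 then 1 else 0))") auto

declare rew.simps [simp del]

definition Rexp :: "nat \<Rightarrow> nat \<Rightarrow> nat \<Rightarrow> real" where
  "Rexp n h i = (\<Sum>s=1..h-i. rew n h i s * prob n * (1 - prob n) ^ (s - 1))"

lemma rew_1: "i \<le> h - 1 \<Longrightarrow> 1 \<le> h \<Longrightarrow>
  rew n h i 1 = real n * Rexp n h (i+1) + Pcum n (h - i - 1)"
  by (subst rew.simps) (auto simp add: Rexp_def)

end

theory Submission
  imports Defs
begin

lemma Pcum_closed: "n \<ge> 1 \<Longrightarrow> Pcum n m = 1 - (1 - prob n) ^ m"
proof (induction m)
  case 0 then show ?case by (simp add: Pcum_def)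
next
  case (Suc m)
  have "Pcum n (Suc m) = Pcum n m + prob n * (1 - prob n) ^ m"
    by (simp add: Pcum_def)
  then show ?case using Suc by (simp add: algebra_simps)
qed

lemma prob_bounds: "n \<ge> 1 \<Longrightarrow> 0 \<le> 1 - prob n \<and> 1 - prob n \<le> 1"
  by (simp add: prob_def)

lemma Pcum_mono: assumes "n \<ge> 1" "m \<le> h" shows "Pcum n m \<le> Pcum n h"
proof -
  have "(1 - prob n) ^ h \<le> (1 - prob n) ^ m"
    using prob_bounds[OF assms(1)] assms(2) by (simp add: power_decreasing)
  then show ?thesis using Pcum_closed[OF assms(1)] by simp
qed

lemma Pcum_le1: "n \<ge> 1 \<Longrightarrow> Pcum n m \<le> 1"
  using Pcum_closed prob_bounds by simp

lemma Pcum_nonneg: "n \<ge> 1 \<Longrightarrow> 0 \<le> Pcum n m"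
  using Pcum_closed prob_bounds by (simp add: power_le_one)

lemma Pcum_split: "m \<ge> 1 \<Longrightarrow> Pcum n m = prob n + (\<Sum>s=2..m. prob n * (1 - prob n) ^ (s - 1))"
  unfolding Pcum_def by (subst sum.atLeast_Suc_atMost) (auto simp: numeral_2_eq_2)

lemma step:
  assumes n: "n \<ge> 1" and t: "t + 1 \<le> h - 1"
  shows "rew n h t 1 \<le> rew n h (t+1) 1 + real n * Pcum n h"
proof -
  define m where "m = h - (t+1)"
  have m1: "m \<ge> 1" using t m_def by simp
  have hm: "h - t - 1 = m" using m_def by simp
  have r: "rew n h t 1 = real n * Rexp n h (t+1) + Pcum n m"
    using rew_1[of t h n] t hm by simp
  have ones: "\<And>s. s \<in> {2..m} \<Longrightarrow> rew n h (t+1) s = 1"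
    by (subst rew.simps) (auto simp: m_def)
  have "Rexp n h (t+1) = rew n h (t+1) 1 * prob n
        + (\<Sum>s=2..m. rew n h (t+1) s * prob n * (1 - prob n) ^ (s - 1))"
    unfolding Rexp_def m_def[symmetric] using m1 by (subst sum.atLeast_Suc_atMost) (auto simp: numeral_2_eq_2)
  also have "(\<Sum>s=2..m. rew n h (t+1) s * prob n * (1 - prob n) ^ (s - 1))
      = (\<Sum>s=2..m. prob n * (1 - prob n) ^ (s - 1))"
  proof (rule sum.cong[OF refl])
    fix s assume "s \<in> {2..m}"
    then show "rew n h (t+1) s * prob n * (1 - prob n) ^ (s - 1) = prob n * (1 - prob n) ^ (s - 1)"
      using ones[of s] by simp
  qed
  also have "\<dots> = Pcum n m - prob n" using Pcum_split[OF m1] by simp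
  finally have R: "Rexp n h (t+1) = rew n h (t+1) 1 * prob n + (Pcum n m - prob n)" .
  have np: "real n * prob n = 1" using n by (simp add: prob_def)
  have "rew n h t 1 = rew n h (t+1) 1 + real n * Pcum n m - 1 + Pcum n m"
  proof -
    have "real n * Rexp n h (t+1) = rew n h (t+1) 1 * (real n * prob n) + real n * Pcum n m - real n * prob n"
      unfolding R by (simp add: algebra_simps)
    then show ?thesis using r np by simp
  qed
  also have "\<dots> \<le> rew n h (t+1) 1 + real n * Pcum n m"
    using Pcum_le1[OF n] by simp
  also have "\<dots> \<le> rew n h (t+1) 1 + real n * Pcum n h"
    using Pcum_mono[OF n, of m h] m_def by (simp add: mult_left_mono)
  finally show ?thesis .
qed

lemma key:
  assumes n: "n \<ge> 1" and h: "h \<ge> 1"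
  shows "k = h - 1 - t \<Longrightarrow> t \<le> h - 1 \<Longrightarrow> rew n h t 1 \<le> real k * real n * Pcum n h"
proof (induction k arbitrary: t)
  case 0
  then have t: "t = h - 1" by simp
  have "rew n h t 1 = real n * Rexp n h (t+1) + Pcum n (h - t - 1)"
    using rew_1[of t h n] h t by simp
  also have "\<dots> = 0" using t h by (simp add: Rexp_def Pcum_def)
  finally show ?case by simp
next
  case (Suc k)
  then have t1: "t + 1 \<le> h - 1" by simp
  have IH: "rew n h (t+1) 1 \<le> real k * real n * Pcum n h" 
  proof -
    have "k = h - 1 - (t+1)" using Suc.prems by simp
    then show ?thesis using Suc.IH[of "t+1"] t1 by blast
  qed
  have "rew n h t 1 \<le> rew n h (t+1) 1 + real n * Pcum n h" by (rule step[OF n t1])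
  then show ?case using IH by (simp add: algebra_simps)
qed

lemma key2:
  assumes n: "n \<ge> 1" and h: "h \<ge> 1" and t: "t \<le> h - 1"
  shows "rew n h t 1 \<le> real h * real n * Pcum n h"
proof -
  have a: "rew n h t 1 \<le> real (h - 1 - t) * real n * Pcum n h" using key[OF n h refl t] .
  have "real (h - 1 - t) * (real n * Pcum n h) \<le> real h * (real n * Pcum n h)"
    by (rule mult_right_mono) (use Pcum_nonneg[OF n] in auto)
  then show ?thesis using a by (simp add: mult.assoc)
qed

theorem proposition4p2:
  fixes n h i :: nat
  assumes "n \<ge> 1" and "h \<ge> 1" and "1 \<le> i" and "i \<le> h - 1"
  shows "rew n h i 1 \<le> real n * real h * Pcum n h + 1
       \<and> rew n h i 0 \<le> real n * (real h)^2 * Pcum n h + real h"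
proof
  show "rew n h i 1 \<le> real n * real h * Pcum n h + 1"
    using key2[OF assms(1,2,4)] by (simp add: algebra_simps)
  have r0: "rew n h i 0 = (\<Sum>t=i..h-1. rew n h t 1) + 1"
    using assms by (subst rew.simps) auto
  have "(\<Sum>t=i..h-1. rew n h t 1) \<le> (\<Sum>t=i..h-1. real h * real n * Pcum n h)"
    by (rule sum_mono) (use key2[OF assms(1,2)] in auto)
  also have "\<dots> = real (h - i) * (real h * real n * Pcum n h)"
    using assms by simp
  also have "\<dots> \<le> real h * (real h * real n * Pcum n h)"
    by (rule mult_right_mono) (use Pcum_nonneg[OF assms(1)] in auto)
  finally have "rew n h i 0 \<le> real h * (real h * real n * Pcum n h) + 1" using r0 by simp
  also have "\<dots> \<le> real n * (real h)^2 * Pcum n h + real h"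
    using assms by (simp add: power2_eq_square algebra_simps)
  finally show "rew n h i 0 \<le> real n * (real h)^2 * Pcum n h + real h" .
qed

end
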